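(* Let $M$ be a matroid on $[n]$ and $\preceq$ a term order on $\mathbb{R}[x_1,\dots,x_n]$. Then $\mathcal{S}_\preceq(M)$ is a subcomplex of the independence complex $\mathcal{I}(M)$ of $M$.
   Context: $V_M=\{\mathbf{e}_B:B \text{ a basis of } M\}\subseteq\{0,1\}^n$ ($\mathbf{e}_B$ the characteristic vector). $\mathcal{S}_\preceq(M)=\{\tau\subseteq[n]:\prod_{i\in\tau}x_i\notin\mathrm{in}_\preceq(I(V_M))\}$, where $I(V_M)$ is the vanishing ideal of $V_M$ and $\mathrm{in}_\preceq$ the initial ideal. $\mathcal{I}(M)$ is the simplicial complex of independent sets of $M$. *)

theory Defs
  imports Complex_Main "HOL-Library.Poly_Mapping"
begin

text \<open>Monomials are exponent vectors finitely supported maps nat to nat,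
  polynomials over the reals are finitely supported maps from monomials to reals; the ring
  R[x_1,...,x_n] is the set of polynomials whose monomials only involve x_1..x_n.\<close>

type_synonym mon = "nat \<Rightarrow>\<^sub>0 nat"
type_synonym rpoly = "mon \<Rightarrow>\<^sub>0 real"

definition matroid :: "nat \<Rightarrow> nat set set \<Rightarrow> bool" where
  "matroid n \<I> \<longleftrightarrow>
     \<I> \<subseteq> Pow {1..n} \<and> {} \<in> \<I> \<and>
     (\<forall>A\<in>\<I>. \<forall>B. B \<subseteq> A \<longrightarrow> B \<in> \<I>) \<and>
     (\<forall>A\<in>\<I>. \<forall>B\<in>\<I>. card A < card B \<longrightarrow> (\<exists>x\<in>B - A. insert x A \<in> \<I>))"

definition bases :: "nat set set \<Rightarrow> nat set set" where
  "bases \<I> = {B \<in> \<I>. \<forall>A\<in>\<I>. B \<subseteq> A \<longrightarrow> A = B}"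

definition char_vec :: "nat set \<Rightarrow> (nat \<Rightarrow> real)" where
  "char_vec B = (\<lambda>i. if i \<in> B then 1 else 0)"

definition V_M :: "nat set set \<Rightarrow> (nat \<Rightarrow> real) set" where
  "V_M \<I> = char_vec ` bases \<I>"

definition mons :: "nat \<Rightarrow> mon set" where
  "mons n = {m. Poly_Mapping.keys m \<subseteq> {1..n}}"

definition polys :: "nat \<Rightarrow> rpoly set" where
  "polys n = {p. Poly_Mapping.keys p \<subseteq> mons n}"

definition var :: "nat \<Rightarrow> rpoly" where
  "var i = Poly_Mapping.single (Poly_Mapping.single i 1) 1"

definition mon_poly :: "mon \<Rightarrow> rpoly" where
  "mon_poly m = Poly_Mapping.single m 1"

definition eval_poly :: "rpoly \<Rightarrow> (nat \<Rightarrow> real) \<Rightarrow> real" where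
  "eval_poly p a = (\<Sum>m\<in>Poly_Mapping.keys p. Poly_Mapping.lookup p m * (\<Prod>i\<in>Poly_Mapping.keys m. a i ^ Poly_Mapping.lookup m i))"

definition term_order :: "nat \<Rightarrow> (mon \<Rightarrow> mon \<Rightarrow> bool) \<Rightarrow> bool" where
  "term_order n le \<longleftrightarrow>
     (\<forall>a\<in>mons n. le a a) \<and>
     (\<forall>a\<in>mons n. \<forall>b\<in>mons n. le a b \<and> le b a \<longrightarrow> a = b) \<and>
     (\<forall>a\<in>mons n. \<forall>b\<in>mons n. \<forall>c\<in>mons n. le a b \<and> le b c \<longrightarrow> le a c) \<and>
     (\<forall>a\<in>mons n. \<forall>b\<in>mons n. le a b \<or> le b a) \<and>
     (\<forall>a\<in>mons n. le 0 a) \<and>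
     (\<forall>a\<in>mons n. \<forall>b\<in>mons n. \<forall>c\<in>mons n. le a b \<longrightarrow> le (a + c) (b + c))"

definition lead_mon :: "(mon \<Rightarrow> mon \<Rightarrow> bool) \<Rightarrow> rpoly \<Rightarrow> mon" where
  "lead_mon le p = (THE m. m \<in> Poly_Mapping.keys p \<and> (\<forall>m'\<in>Poly_Mapping.keys p. le m' m))"

inductive_set ideal_gen :: "nat \<Rightarrow> rpoly set \<Rightarrow> rpoly set" for n G where
  zero: "0 \<in> ideal_gen n G"
| gen: "g \<in> G \<Longrightarrow> g \<in> ideal_gen n G"
| add: "a \<in> ideal_gen n G \<Longrightarrow> b \<in> ideal_gen n G \<Longrightarrow> a + b \<in> ideal_gen n G"
| mult: "p \<in> polys n \<Longrightarrow> a \<in> ideal_gen n G \<Longrightarrow> p * a \<in> ideal_gen n G"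

definition vanishing_ideal :: "nat \<Rightarrow> (nat \<Rightarrow> real) set \<Rightarrow> rpoly set" where
  "vanishing_ideal n V = {p \<in> polys n. \<forall>a\<in>V. eval_poly p a = 0}"

definition initial_ideal :: "nat \<Rightarrow> (mon \<Rightarrow> mon \<Rightarrow> bool) \<Rightarrow> rpoly set \<Rightarrow> rpoly set" where
  "initial_ideal n le I = ideal_gen n {mon_poly (lead_mon le f) | f. f \<in> I \<and> f \<noteq> 0}"

definition S_complex :: "nat \<Rightarrow> (mon \<Rightarrow> mon \<Rightarrow> bool) \<Rightarrow> nat set set \<Rightarrow> nat set set" where
  "S_complex n le \<I> =
     {\<tau>. \<tau> \<subseteq> {1..n} \<and> (\<Prod>i\<in>\<tau>. var i) \<notin> initial_ideal n le (vanishing_ideal n (V_M \<I>))}"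

definition simplicial_complex :: "nat set set \<Rightarrow> bool" where
  "simplicial_complex K \<longleftrightarrow> (\<forall>\<sigma>\<in>K. finite \<sigma> \<and> (\<forall>\<tau>. \<tau> \<subseteq> \<sigma> \<longrightarrow> \<tau> \<in> K))"

definition subcomplex :: "nat set set \<Rightarrow> nat set set \<Rightarrow> bool" where
  "subcomplex K L \<longleftrightarrow> simplicial_complex K \<and> K \<subseteq> L"

end

theory Submission
  imports Defs
begin

definition sqm :: "nat set \<Rightarrow> mon" where
  "sqm t = (\<Sum>i\<in>t. Poly_Mapping.single i (1::nat))"

lemma lookup_sqm: "finite t \<Longrightarrow> Poly_Mapping.lookup (sqm t) i = (if i \<in> t then 1 else 0)"
  unfolding sqm_def lookup_sum by (simp add: lookup_single when_def)

lemma keys_sqm: "finite t \<Longrightarrow> Poly_Mapping.keys (sqm t) = t"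
  by (auto simp: in_keys_iff lookup_sqm split: if_splits)

lemma prod_var: "finite t \<Longrightarrow> (\<Prod>i\<in>t. var i) = Poly_Mapping.single (sqm t) 1"
proof (induction t rule: finite_induct)
  case empty
  then show ?case by (simp add: sqm_def one_poly_mapping.abs_eq single.abs_eq)
next
  case (insert x F)
  then show ?case by (simp add: sqm_def var_def mult_single)
qed

lemma prod_var_polys: "t \<subseteq> {1..n} \<Longrightarrow> (\<Prod>i\<in>t. var i) \<in> polys n"
  using finite_subset[of t "{1..n}"]
  by (simp add: prod_var polys_def mons_def keys_sqm)

theorem corollary2p5:
  fixes n :: nat and \<I> :: "nat set set" and le :: "mon \<Rightarrow> mon \<Rightarrow> bool"
  assumes "matroid n \<I>" and "term_order n le"
  shows "subcomplex (S_complex n le \<I>) \<I>"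
proof -
  let ?J = "initial_ideal n le (vanishing_ideal n (V_M \<I>))"
  have sc: "simplicial_complex (S_complex n le \<I>)"
    unfolding simplicial_complex_def
  proof (intro ballI conjI allI impI)
    fix s assume s: "s \<in> S_complex n le \<I>"
    have sn: "s \<subseteq> {1..n}" and nj: "(\<Prod>i\<in>s. var i) \<notin> ?J" using s by (auto simp: S_complex_def)
    have fs: "finite s" using sn finite_subset by blast
    show "finite s" by fact
    fix t assume ts: "t \<subseteq> s"
    have eq: "(\<Prod>i\<in>s. var i) = (\<Prod>i\<in>s - t. var i) * (\<Prod>i\<in>t. var i)"
      using prod.subset_diff[OF ts fs] by simp
    have "(\<Prod>i\<in>t. var i) \<notin> ?J"
    proof
      assume "(\<Prod>i\<in>t. var i) \<in> ?J"
      then have "(\<Prod>i\<in>s - t. var i) * (\<Prod>i\<in>t. var i) \<in> ?J"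
      proof -
        have "(\<Prod>i\<in>s - t. var i) \<in> polys n" using prod_var_polys[of "s - t" n] sn by blast
        then show ?thesis using \<open>(\<Prod>i\<in>t. var i) \<in> ?J\<close> unfolding initial_ideal_def
          by (rule ideal_gen.mult)
      qed
      with nj eq show False by simp
    qed
    then show "t \<in> S_complex n le \<I>" using ts sn by (auto simp: S_complex_def)
  qed
  have sub: "S_complex n le \<I> \<subseteq> \<I>"
  proof
    fix t assume t: "t \<in> S_complex n le \<I>"
    have tn: "t \<subseteq> {1..n}" and nj: "(\<Prod>i\<in>t. var i) \<notin> ?J" using t by (auto simp: S_complex_def)
    have ft: "finite t" using tn finite_subset by blast
    show "t \<in> \<I>"
    proof (rule ccontr)
      assume nt: "t \<notin> \<I>"
      let ?m = "sqm t"
      let ?f = "Poly_Mapping.single ?m (1::real)"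
      have fprod: "(\<Prod>i\<in>t. var i) = ?f" using prod_var[OF ft] .
      have mm: "?m \<in> mons n" using keys_sqm[OF ft] tn by (simp add: mons_def)
      have fp: "?f \<in> polys n" using mm by (simp add: polys_def)
      have van: "eval_poly ?f a = 0" if aV: "a \<in> V_M \<I>" for a
      proof -
        obtain B where B: "B \<in> bases \<I>" and a: "a = char_vec B" using aV unfolding V_M_def by blast
        have "B \<in> \<I>" using B by (simp add: bases_def)
        then have "\<not> t \<subseteq> B" using nt assms(1) unfolding matroid_def by blast
        then obtain i where i: "i \<in> t" "i \<notin> B" by blast
        have "(\<Prod>i\<in>t. a i ^ Poly_Mapping.lookup ?m i) = 0"
          using i ft by (auto simp: a char_vec_def lookup_sqm intro!: bexI[of _ i])
        then show ?thesis by (simp add: eval_poly_def keys_sqm ft)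
      qed
      have fin: "?f \<in> vanishing_ideal n (V_M \<I>)" using fp van by (simp add: vanishing_ideal_def)
      have nz: "?f \<noteq> 0" by (metis keys_single insert_not_empty keys_zero zero_neq_one)
      have le_mm: "le ?m ?m" using assms(2) mm by (simp add: term_order_def)
      have "lead_mon le ?f = ?m"
        unfolding lead_mon_def using le_mm by (rule_tac the_equality) auto
      then have "mon_poly (lead_mon le ?f) = ?f" by (simp add: mon_poly_def)
      then have "?f \<in> ?J" unfolding initial_ideal_def
        using fin nz by (intro ideal_gen.gen) (metis (mono_tags, lifting) mem_Collect_eq)
      with nj fprod show False by simp
    qed
  qed
  show ?thesis using sc sub by (simp add: subcomplex_def)
qed

end
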